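(* Let $\lambda>0$ be the wavelength, let $N\ge 1$ be an integer, let $\delta=\lambda/2$, let $\Delta\ge 0$, and set $\overline{\Delta}=\frac{\Delta+(N-1)\delta}{2}$. Let $z>0$ and $F>0$ with $z\neq F$, and define $$\hat{G}_2=\frac{1}{(2N\delta^2)^2}\Bigg|\int_{-\frac{N\delta}{2}}^{\frac{N\delta}{2}}\int_{-\frac{\delta}{2}}^{\frac{\delta}{2}} e^{\mathrm{i}\frac{2\pi}{\lambda}\left(\frac{(x-\overline{\Delta})^2}{2F}+\frac{y^2}{2F}\right)}e^{-\mathrm{i}\frac{2\pi}{\lambda}\left(\frac{(x-\overline{\Delta})^2}{2z}+\frac{y^2}{2z}\right)}dy\,dx$$ $$\qquad\qquad+\int_{-\frac{N\delta}{2}}^{\frac{N\delta}{2}}\int_{-\frac{\delta}{2}}^{\frac{\delta}{2}} e^{\mathrm{i}\frac{2\pi}{\lambda}\left(\frac{(x+\overline{\Delta})^2}{2F}+\frac{y^2}{2F}\right)}e^{-\mathrm{i}\frac{2\pi}{\lambda}\left(\frac{(x+\overline{\Delta})^2}{2z}+\frac{y^2}{2z}\right)}dy\,dx\Bigg|^2 .$$ Let $z_{\rm eff}=\frac{Fz}{|F-z|}$, $a=\frac{\lambda}{8z_{\rm eff}}$, $\beta_1=\sqrt{a}\,N+\sqrt{\frac{2}{\lambda z_{\rm eff}}}\,\overline{\Delta}$ and $\beta_2=\sqrt{a}\,N-\sqrt{\frac{2}{\lambda z_{\rm eff}}}\,\overline{\Delta}$. Then $$\hat{G}_2=\frac{1}{(2Na)^2}\left(C^2(\sqrt{a})+S^2(\sqrt{a})\right)\left(\left(C(\beta_1)+C(\beta_2)\right)^2+\left(S(\beta_1)+S(\beta_2)\right)^2\right),$$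 where $C$ and $S$ are the Fresnel integrals.
   Context: The Fresnel integrals are $C(u)=\int_0^u\cos\left(\frac{\pi t^2}{2}\right)dt$ and $S(u)=\int_0^u\sin\left(\frac{\pi t^2}{2}\right)dt$; $\mathrm{i}$ is the imaginary unit. Physically, $\hat{G}_2$ is the (Fresnel-approximated) normalized array gain of a modular linear array consisting of two collinear uniform linear arrays of $N$ antennas each (antenna side $\delta$) along the $x$-axis separated by $\Delta$, receiving from a transmitter at $(0,0,z)$ with matched filtering focused at $(0,0,F)$. *)

theory Defs
  imports "HOL-Analysis.Analysis"
begin

text \<open>Fresnel integrals, as oriented (interval) Lebesgue integrals, so that
  they are also correct (odd) for negative arguments.\<close>
definition fresnel_C :: "real \<Rightarrow> real" where
  "fresnel_C u = (LBINT t=0..u. cos (pi * t\<^sup>2 / 2))"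

definition fresnel_S :: "real \<Rightarrow> real" where
  "fresnel_S u = (LBINT t=0..u. sin (pi * t\<^sup>2 / 2))"

text \<open>Integrand of one module: phase of the matched filter focused at F times
  the conjugate phase of the incoming wave from distance z, module centre shifted by c.\<close>
definition module_phase :: "real \<Rightarrow> real \<Rightarrow> real \<Rightarrow> real \<Rightarrow> real \<Rightarrow> real \<Rightarrow> complex" where
  "module_phase lam F z c x y =
     exp (\<i> * complex_of_real (2 * pi / lam * ((x - c)\<^sup>2 / (2 * F) + y\<^sup>2 / (2 * F))))
   * exp (- \<i> * complex_of_real (2 * pi / lam * ((x - c)\<^sup>2 / (2 * z) + y\<^sup>2 / (2 * z))))"

definition G2_hat :: "real \<Rightarrow> nat \<Rightarrow> real \<Rightarrow> real \<Rightarrow> real \<Rightarrow> real \<Rightarrow> real" where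
  "G2_hat lam N delta Dbar F z =
     1 / (2 * real N * delta\<^sup>2)\<^sup>2 *
     (cmod (integral {- (real N * delta / 2) .. real N * delta / 2}
              (\<lambda>x. integral {- (delta / 2) .. delta / 2} (\<lambda>y. module_phase lam F z Dbar x y))
          + integral {- (real N * delta / 2) .. real N * delta / 2}
              (\<lambda>x. integral {- (delta / 2) .. delta / 2} (\<lambda>y. module_phase lam F z (- Dbar) x y))))\<^sup>2"

end

theory Submission imports Defs begin

lemma lbint_deriv:
  fixes f :: "real \<Rightarrow> real"
  assumes "continuous_on UNIV f"
  shows "((\<lambda>u. LBINT t=0..u. f t) has_real_derivative f x) (at x)"
proof -
  let ?b = "\<bar>x\<bar> + 1"
  have "((\<lambda>u. LBINT t=0..u. f t) has_vector_derivative f x) (at x within {-?b..?b})"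
    using interval_integral_FTC2[of "-?b" 0 ?b f x] assms
    by (simp add: zero_ereal_def[symmetric] continuous_on_subset abs_le_iff)
  moreover have "x \<in> {-?b<..<?b}" by auto
  ultimately have "((\<lambda>u. LBINT t=0..u. f t) has_vector_derivative f x) (at x)"
    by (metis greaterThanLessThan_subseteq_atLeastAtMost_iff has_vector_derivative_within_subset
        has_vector_derivative_within_open open_greaterThanLessThan order_refl)
  then show ?thesis by (simp add: has_real_derivative_iff_has_vector_derivative)
qed

lemma fresnel_C_deriv: "(fresnel_C has_real_derivative cos (pi * x\<^sup>2 / 2)) (at x)"
  unfolding fresnel_C_def[abs_def]
  by (rule lbint_deriv[where f="\<lambda>t. cos (pi * t\<^sup>2 / 2)"]) (intro continuous_intros, auto)

lemma fresnel_S_deriv: "(fresnel_S has_real_derivative sin (pi * x\<^sup>2 / 2)) (at x)"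
  unfolding fresnel_S_def[abs_def]
  by (rule lbint_deriv[where f="\<lambda>t. sin (pi * t\<^sup>2 / 2)"]) (intro continuous_intros, auto)

lemma fresnel_C_odd: "fresnel_C (- u) = - fresnel_C u"
proof -
  have "\<And>x. ((\<lambda>u. fresnel_C u + fresnel_C (-u)) has_real_derivative 0) (at x)"
  proof -
    fix x
    have "((\<lambda>u. fresnel_C (-u)) has_real_derivative cos (pi * (-x)\<^sup>2 / 2) * (-1)) (at x)"
      by (rule DERIV_chain2[OF fresnel_C_deriv]) (rule derivative_eq_intros refl | simp)+
    then show "((\<lambda>u. fresnel_C u + fresnel_C (-u)) has_real_derivative 0) (at x)"
      using DERIV_add[OF fresnel_C_deriv] by fastforce
  qed
  then have "fresnel_C u + fresnel_C (-u) = fresnel_C 0 + fresnel_C (-0)"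
    by (rule DERIV_isconst_all[rule_format])
  then show ?thesis by (simp add: fresnel_C_def zero_ereal_def[symmetric])
qed

lemma fresnel_S_odd: "fresnel_S (- u) = - fresnel_S u"
proof -
  have "\<And>x. ((\<lambda>u. fresnel_S u + fresnel_S (-u)) has_real_derivative 0) (at x)"
  proof -
    fix x
    have "((\<lambda>u. fresnel_S (-u)) has_real_derivative sin (pi * (-x)\<^sup>2 / 2) * (-1)) (at x)"
      by (rule DERIV_chain2[OF fresnel_S_deriv]) (rule derivative_eq_intros refl | simp)+
    then show "((\<lambda>u. fresnel_S u + fresnel_S (-u)) has_real_derivative 0) (at x)"
      using DERIV_add[OF fresnel_S_deriv] by fastforce
  qed
  then have "fresnel_S u + fresnel_S (-u) = fresnel_S 0 + fresnel_S (-0)"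
    by (rule DERIV_isconst_all[rule_format])
  then show ?thesis by (simp add: fresnel_S_def zero_ereal_def[symmetric])
qed


definition Ef :: "real \<Rightarrow> real \<Rightarrow> complex" where
  "Ef s u = complex_of_real (fresnel_C u) + \<i> * complex_of_real s * complex_of_real (fresnel_S u)"

lemma Ef_odd: "Ef s (- u) = - Ef s u"
  by (simp add: Ef_def fresnel_C_odd fresnel_S_odd algebra_simps)

lemma exp_sign:
  assumes "s = 1 \<or> s = -1"
  shows "exp (\<i> * complex_of_real (s * t)) =
     complex_of_real (cos t) + \<i> * complex_of_real s * complex_of_real (sin t)"
proof -
  have "exp (\<i> * complex_of_real (s * t)) = cis (s * t)" by (simp add: cis_conv_exp)
  then show ?thesis using assms by (auto simp: complex_eq_iff)
qed

lemma Ef_deriv: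
  assumes "s = 1 \<or> s = -1"
  shows "(Ef s has_vector_derivative exp (\<i> * complex_of_real (s * (pi * u\<^sup>2 / 2)))) (at u)"
proof -
  have "(Ef s has_vector_derivative
     complex_of_real (cos (pi * u\<^sup>2 / 2)) + \<i> * complex_of_real s * complex_of_real (sin (pi * u\<^sup>2 / 2))) (at u)"
    unfolding Ef_def[abs_def]
    by (intro derivative_eq_intros has_vector_derivative_of_real fresnel_C_deriv fresnel_S_deriv) (auto intro: fresnel_C_deriv fresnel_S_deriv)
  then show ?thesis by (subst exp_sign[OF assms])
qed

lemma prim_deriv:
  assumes "s = 1 \<or> s = -1" "r \<noteq> 0"
  shows "((\<lambda>x. Ef s ((x - c) * r) / complex_of_real r) has_vector_derivative
           exp (\<i> * complex_of_real (s * (pi * ((x - c) * r)\<^sup>2 / 2)))) (at x)"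
proof -
  have d1: "((\<lambda>x. (x - c) * r) has_vector_derivative r) (at x)"
  proof -
    have "((\<lambda>x. (x - c) * r) has_real_derivative (1 - 0) * r) (at x)"
      by (intro DERIV_cmult_right DERIV_diff DERIV_ident DERIV_const)
    then show ?thesis by (simp add: has_real_derivative_iff_has_vector_derivative)
  qed
  have "((Ef s \<circ> (\<lambda>x. (x - c) * r)) has_vector_derivative
          r *\<^sub>R exp (\<i> * complex_of_real (s * (pi * ((x - c) * r)\<^sup>2 / 2)))) (at x)"
    by (rule vector_diff_chain_at[OF d1 Ef_deriv[OF assms(1)]])
  then have "((\<lambda>x. Ef s ((x - c) * r) * (1 / complex_of_real r)) has_vector_derivative
          r *\<^sub>R exp (\<i> * complex_of_real (s * (pi * ((x - c) * r)\<^sup>2 / 2))) * (1 / complex_of_real r)) (at x)"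
    by (intro has_vector_derivative_mult_left) (simp add: o_def)
  then show ?thesis using assms(2) by (simp add: scaleR_conv_of_real)
qed

lemma int_formula:
  assumes "s = 1 \<or> s = -1" "r \<noteq> 0" "p \<le> q"
  shows "integral {p..q} (\<lambda>x. exp (\<i> * complex_of_real (s * (pi * ((x - c) * r)\<^sup>2 / 2))))
       = (Ef s ((q - c) * r) - Ef s ((p - c) * r)) / complex_of_real r"
proof -
  have "((\<lambda>x. exp (\<i> * complex_of_real (s * (pi * ((x - c) * r)\<^sup>2 / 2)))) has_integral
     (Ef s ((q - c) * r) / complex_of_real r - Ef s ((p - c) * r) / complex_of_real r)) {p..q}"
    by (rule fundamental_theorem_of_calculus[OF assms(3)])
       (rule has_vector_derivative_at_within[OF prim_deriv[OF assms(1,2)]])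
  then show ?thesis by (simp add: integral_unique diff_divide_distrib)
qed

lemma cmod_Ef2:
  assumes "s = 1 \<or> s = -1"
  shows "(cmod (Ef s u + Ef s v))\<^sup>2 = (fresnel_C u + fresnel_C v)\<^sup>2 + (fresnel_S u + fresnel_S v)\<^sup>2"
proof -
  have "(- fresnel_S u - fresnel_S v)\<^sup>2 = (fresnel_S u + fresnel_S v)\<^sup>2"
    by (simp add: power2_eq_square algebra_simps)
  then show ?thesis using assms by (elim disjE) (simp_all add: cmod_power2 Ef_def)
qed

lemma cmod_Ef1:
  assumes "s = 1 \<or> s = -1"
  shows "(cmod (Ef s u))\<^sup>2 = (fresnel_C u)\<^sup>2 + (fresnel_S u)\<^sup>2"
  using assms by (elim disjE) (simp_all add: cmod_power2 Ef_def)


lemma alg1: fixes lam F z uu vv :: real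
  assumes "lam \<noteq> 0" "F \<noteq> 0" "z \<noteq> 0"
  shows "2*pi/lam*(uu/(2*F) + vv/(2*F)) - 2*pi/lam*(uu/(2*z)+vv/(2*z)) = 2*(z-F)/(lam*F*z)*(pi * uu / 2) + 2*(z-F)/(lam*F*z)*(pi * vv / 2)"
  using assms by (simp add: field_simps)
lemma alg2: fixes A B :: complex and r :: real
  assumes "r \<noteq> 0"
  shows "B / complex_of_real r * (2 * A / complex_of_real r) + B / complex_of_real r * (2 * A / complex_of_real r) = 4 / complex_of_real (r\<^sup>2) * (A * B)"
  using assms by (simp add: field_simps power2_eq_square)
lemma alg3: fixes lam a :: real and N :: nat
  assumes "lam > 0" "a > 0" "N \<ge> 1"
  shows "1 / (2 * real N * (lam/2)\<^sup>2)\<^sup>2 * (4 / (16 * a / lam\<^sup>2))\<^sup>2 = 1 / (2 * real N * a)\<^sup>2"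
  using assms by (simp add: field_simps power2_eq_square)

lemma exp_combine:
  fixes A B P Q :: real
  assumes "A - B = P + Q"
  shows "exp (\<i> * complex_of_real A) * exp (- \<i> * complex_of_real B)
       = exp (\<i> * complex_of_real P) * exp (\<i> * complex_of_real Q)"
proof -
  have "complex_of_real A - complex_of_real B = complex_of_real P + complex_of_real Q"
    using assms by (metis of_real_add of_real_diff)
  then have "\<i> * (complex_of_real A - complex_of_real B) = \<i> * (complex_of_real P + complex_of_real Q)"
    by simp
  then have "\<i> * complex_of_real A + - \<i> * complex_of_real B = \<i> * complex_of_real P + \<i> * complex_of_real Q"
    by (simp add: algebra_simps)
  then show ?thesis by (metis exp_add)
qed

theorem theorem2:
  fixes lam Delta z F :: real and N :: nat
  assumes "lam > 0" and "N \<ge> 1" and "Delta \<ge> 0"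
    and "z > 0" and "F > 0" and "z \<noteq> F"
  defines "delta \<equiv> lam / 2"
  defines "Dbar \<equiv> (Delta + (real N - 1) * delta) / 2"
  defines "zeff \<equiv> F * z / \<bar>F - z\<bar>"
  defines "a \<equiv> lam / (8 * zeff)"
  defines "beta1 \<equiv> sqrt a * real N + sqrt (2 / (lam * zeff)) * Dbar"
  defines "beta2 \<equiv> sqrt a * real N - sqrt (2 / (lam * zeff)) * Dbar"
  shows "G2_hat lam N delta Dbar F z =
           1 / (2 * real N * a)\<^sup>2
           * ((fresnel_C (sqrt a))\<^sup>2 + (fresnel_S (sqrt a))\<^sup>2)
           * ((fresnel_C beta1 + fresnel_C beta2)\<^sup>2 + (fresnel_S beta1 + fresnel_S beta2)\<^sup>2)"
proof -
  define r where "r = sqrt (2 / (lam * zeff))"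
  define s :: real where "s = (if F < z then 1 else -1)"
  have s1: "s = 1 \<or> s = -1" by (simp add: s_def)
  have ss: "s * \<bar>F - z\<bar> = z - F" using assms(6) by (auto simp: s_def)
  have zeffpos: "zeff > 0" using assms(4,5,6) by (simp add: zeff_def)
  have apos: "a > 0" using assms(1) zeffpos by (simp add: a_def)
  have rpos: "r > 0" using assms(1) zeffpos by (simp add: r_def)
  have r2: "r\<^sup>2 = 2 / (lam * zeff)" using assms(1) zeffpos by (simp add: r_def)
  have sr2: "s * r\<^sup>2 = 2 * (z - F) / (lam * F * z)"
  proof -
    have "s * r\<^sup>2 = s * (2 / (lam * zeff))" by (simp add: r2)
    also have "\<dots> = 2 * (s * \<bar>F - z\<bar>) / (lam * F * z)"
      using assms(1,4,5,6) by (simp add: zeff_def field_simps)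
    finally have "s * r\<^sup>2 = 2 * (s * \<bar>F - z\<bar>) / (lam * F * z)" .
    then show ?thesis by (simp add: ss)
  qed
  have hd: "delta > 0" using assms(1) by (simp add: delta_def)
  have sqa: "sqrt a = delta / 2 * r"
  proof -
    have "a = (delta / 2)\<^sup>2 * r\<^sup>2"
      unfolding r2 using assms(1) zeffpos by (simp add: r2 a_def delta_def field_simps power2_eq_square)
    then have "sqrt a = \<bar>delta / 2 * r\<bar>" by (metis power_mult_distrib real_sqrt_abs)
    then show ?thesis using rpos hd by simp
  qed
  define X where "X c x = exp (\<i> * complex_of_real (s * (pi * ((x - c) * r)\<^sup>2 / 2)))" for c x
  have mp: "module_phase lam F z c x y = X c x * X 0 y" for c x y
    unfolding module_phase_def X_def
  proof (rule exp_combine)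
    have f0: "2 * pi / lam * ((x - c)\<^sup>2 / (2 * F) + y\<^sup>2 / (2 * F))
        - 2 * pi / lam * ((x - c)\<^sup>2 / (2 * z) + y\<^sup>2 / (2 * z))
        = (s * r\<^sup>2) * (pi * (x - c)\<^sup>2 / 2) + (s * r\<^sup>2) * (pi * y\<^sup>2 / 2)"
      unfolding sr2 using assms(1,4,5) by (intro alg1) auto
    have e1: "s * (pi * ((x - c) * r)\<^sup>2 / 2) = (s * r\<^sup>2) * (pi * (x - c)\<^sup>2 / 2)"
      by (simp add: power_mult_distrib mult_ac)
    have e2: "s * (pi * ((y - 0) * r)\<^sup>2 / 2) = (s * r\<^sup>2) * (pi * y\<^sup>2 / 2)"
      by (simp add: power_mult_distrib mult_ac)
    show "2 * pi / lam * ((x - c)\<^sup>2 / (2 * F) + y\<^sup>2 / (2 * F))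
        - 2 * pi / lam * ((x - c)\<^sup>2 / (2 * z) + y\<^sup>2 / (2 * z))
        = s * (pi * ((x - c) * r)\<^sup>2 / 2) + s * (pi * ((y - 0) * r)\<^sup>2 / 2)"
      unfolding e1 e2 by (rule f0)
  qed
  have hd: "delta > 0" using assms(1) by (simp add: delta_def)
  define K where "K = integral {- (delta / 2) .. delta / 2} (X 0)"
  have K: "K = 2 * Ef s (sqrt a) / complex_of_real r"
  proof -
    have "K = (Ef s ((delta / 2 - 0) * r) - Ef s ((- (delta / 2) - 0) * r)) / complex_of_real r"
      unfolding K_def X_def using hd rpos by (intro int_formula s1) auto
    also have "\<dots> = 2 * Ef s (sqrt a) / complex_of_real r"
      using Ef_odd[of s "sqrt a"] by (simp add: sqa)
    finally show ?thesis .
  qed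
  have inner: "integral {- (delta / 2) .. delta / 2} (\<lambda>y. module_phase lam F z c x y) = X c x * K" for c x
    unfolding mp K_def by simp
  have hN: "real N * delta / 2 > 0" using hd assms(2) by simp
  have rb1: "(real N * delta / 2 + Dbar) * r = beta1"
    by (simp add: beta1_def r_def[symmetric] sqa algebra_simps)
  have rb2: "(real N * delta / 2 - Dbar) * r = beta2"
    by (simp add: beta2_def r_def[symmetric] sqa algebra_simps)
  have I1: "integral {- (real N * delta / 2) .. real N * delta / 2} (X Dbar)
      = (Ef s beta1 + Ef s beta2) / complex_of_real r"
  proof -
    have "integral {- (real N * delta / 2) .. real N * delta / 2} (X Dbar)
      = (Ef s ((real N * delta / 2 - Dbar) * r) - Ef s ((- (real N * delta / 2) - Dbar) * r)) / complex_of_real r"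
      unfolding X_def using hN rpos by (intro int_formula s1) auto
    also have "(- (real N * delta / 2) - Dbar) * r = - beta1" using rb1 by (simp add: algebra_simps)
    finally show ?thesis using rb2 Ef_odd[of s beta1] by simp
  qed
  have I2: "integral {- (real N * delta / 2) .. real N * delta / 2} (X (- Dbar))
      = (Ef s beta1 + Ef s beta2) / complex_of_real r"
  proof -
    have "integral {- (real N * delta / 2) .. real N * delta / 2} (X (- Dbar))
      = (Ef s ((real N * delta / 2 - - Dbar) * r) - Ef s ((- (real N * delta / 2) - - Dbar) * r)) / complex_of_real r"
      unfolding X_def using hN rpos by (intro int_formula s1) auto
    also have "(- (real N * delta / 2) - - Dbar) * r = - beta2" using rb2 by (simp add: algebra_simps)
    finally show ?thesis using rb1 Ef_odd[of s beta2] by (simp add: add.commute)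
  qed
  have tot: "integral {- (real N * delta / 2) .. real N * delta / 2}
              (\<lambda>x. integral {- (delta / 2) .. delta / 2} (\<lambda>y. module_phase lam F z Dbar x y))
          + integral {- (real N * delta / 2) .. real N * delta / 2}
              (\<lambda>x. integral {- (delta / 2) .. delta / 2} (\<lambda>y. module_phase lam F z (- Dbar) x y))
      = (4 / complex_of_real (r\<^sup>2)) * (Ef s (sqrt a) * (Ef s beta1 + Ef s beta2))"
    unfolding inner integral_mult_left I1 I2 K using rpos by (intro alg2) auto
  have h1: "(cmod ((4 / complex_of_real (r\<^sup>2)) * (Ef s (sqrt a) * (Ef s beta1 + Ef s beta2))))\<^sup>2
      = (4 / r\<^sup>2)\<^sup>2 * ((fresnel_C (sqrt a))\<^sup>2 + (fresnel_S (sqrt a))\<^sup>2)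
           * ((fresnel_C beta1 + fresnel_C beta2)\<^sup>2 + (fresnel_S beta1 + fresnel_S beta2)\<^sup>2)"
  proof -
    have hK: "cmod (4 / complex_of_real (r\<^sup>2)) = 4 / r\<^sup>2"
      by (simp add: norm_divide norm_power)
    have "(cmod ((4 / complex_of_real (r\<^sup>2)) * (Ef s (sqrt a) * (Ef s beta1 + Ef s beta2))))\<^sup>2
       = (cmod (4 / complex_of_real (r\<^sup>2)))\<^sup>2 * ((cmod (Ef s (sqrt a)))\<^sup>2 * (cmod (Ef s beta1 + Ef s beta2))\<^sup>2)"
      by (simp only: norm_mult power_mult_distrib)
    then show ?thesis unfolding hK cmod_Ef1[OF s1] cmod_Ef2[OF s1] by (simp only: mult.assoc)
  qed
  have h2: "1 / (2 * real N * delta\<^sup>2)\<^sup>2 * (4 / r\<^sup>2)\<^sup>2 = 1 / (2 * real N * a)\<^sup>2"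
  proof -
    have "r\<^sup>2 = 16 * a / lam\<^sup>2" unfolding r2 using assms(1) zeffpos by (simp add: r2 a_def field_simps power2_eq_square)
    then show ?thesis unfolding delta_def using alg3[OF assms(1) apos assms(2)] by simp
  qed
  show ?thesis unfolding G2_hat_def tot h1 by (simp only: mult.assoc[symmetric] h2)
qed

end
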